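(* There is an absolute constant $C$ such that the following holds. Let $d\ge 1$, $\sigma\in(0,1]$, $\theta\in(0,\pi/2)$, and let $L$ be a finite set of closed line segments in $\mathbb{R}^d$ such that (i) $L$ is $\sigma$-exposed, (ii) $\bigcap_{s\in L} s\neq\emptyset$, (iii) for every pair $s,s'\in L$ the angle between $s$ and $s'$ is at most $\theta$, and (iv) $\sin\theta\le \sigma/4$. Then $|L|\le C/\sigma^2$.
   Context: For sets $X, Y\subseteq\mathbb{R}^d$ and $\sigma>0$, $X$ $\sigma$-shadows $Y$ if $\max_{q\in Y} \mathrm{dist}(q, X) \le \sigma\cdot \mathrm{diam}(Y)$, where $\mathrm{dist}(q,X)=\min_{p\in X}\|q-p\|$. A set of objects is $\sigma$-exposed if no object in the set $\sigma$-shadows another (distinct) object of the set. The angle between two segments is the angle in $[0,\pi/2]$ between the lines supporting them. *)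

theory Defs
  imports "HOL-Analysis.Analysis"
begin

text \<open>Since the constant C must be absolute (independent of the dimension d),
the dimension d is an explicit natural number: R^d is represented as the set of
real sequences vanishing from index d on, with the Euclidean metric on the
first d coordinates.\<close>

definition Rd :: "nat \<Rightarrow> (nat \<Rightarrow> real) set" where
  "Rd d = {x. \<forall>i\<ge>d. x i = 0}"

definition edist :: "nat \<Rightarrow> (nat \<Rightarrow> real) \<Rightarrow> (nat \<Rightarrow> real) \<Rightarrow> real" where
  "edist d x y = sqrt (\<Sum>i<d. (x i - y i)^2)"

definition edot :: "nat \<Rightarrow> (nat \<Rightarrow> real) \<Rightarrow> (nat \<Rightarrow> real) \<Rightarrow> real" where
  "edot d u v = (\<Sum>i<d. u i * v i)"

definition enorm :: "nat \<Rightarrow> (nat \<Rightarrow> real) \<Rightarrow> real" where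
  "enorm d u = sqrt (edot d u u)"

definition seg :: "(nat \<Rightarrow> real) \<Rightarrow> (nat \<Rightarrow> real) \<Rightarrow> (nat \<Rightarrow> real) set" where
  "seg p q = {(\<lambda>i. (1 - t) * p i + t * q i) | t. 0 \<le> t \<and> t \<le> 1}"

definition is_segment :: "nat \<Rightarrow> (nat \<Rightarrow> real) set \<Rightarrow> bool" where
  "is_segment d s \<longleftrightarrow> (\<exists>p q. p \<in> Rd d \<and> q \<in> Rd d \<and> p \<noteq> q \<and> s = seg p q)"

definition diam_d :: "nat \<Rightarrow> (nat \<Rightarrow> real) set \<Rightarrow> real" where
  "diam_d d Y = Sup {edist d x y | x y. x \<in> Y \<and> y \<in> Y}"

definition setdist_d :: "nat \<Rightarrow> (nat \<Rightarrow> real) \<Rightarrow> (nat \<Rightarrow> real) set \<Rightarrow> real" where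
  "setdist_d d q X = Inf {edist d q p | p. p \<in> X}"

definition shadows :: "nat \<Rightarrow> real \<Rightarrow> (nat \<Rightarrow> real) set \<Rightarrow> (nat \<Rightarrow> real) set \<Rightarrow> bool" where
  "shadows d \<sigma> X Y \<longleftrightarrow> (\<forall>q\<in>Y. setdist_d d q X \<le> \<sigma> * diam_d d Y)"

definition exposed :: "nat \<Rightarrow> real \<Rightarrow> (nat \<Rightarrow> real) set set \<Rightarrow> bool" where
  "exposed d \<sigma> L \<longleftrightarrow> (\<forall>s\<in>L. \<forall>s'\<in>L. s \<noteq> s' \<longrightarrow> \<not> shadows d \<sigma> s s')"

definition line_angle :: "nat \<Rightarrow> (nat \<Rightarrow> real) \<Rightarrow> (nat \<Rightarrow> real) \<Rightarrow> real" where
  "line_angle d u v = arccos (\<bar>edot d u v\<bar> / (enorm d u * enorm d v))"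

definition endpoints :: "nat \<Rightarrow> (nat \<Rightarrow> real) set \<Rightarrow> (nat \<Rightarrow> real) \<times> (nat \<Rightarrow> real)" where
  "endpoints d s = (SOME pq. fst pq \<in> Rd d \<and> snd pq \<in> Rd d \<and> fst pq \<noteq> snd pq \<and> s = seg (fst pq) (snd pq))"

definition seg_angle :: "nat \<Rightarrow> (nat \<Rightarrow> real) set \<Rightarrow> (nat \<Rightarrow> real) set \<Rightarrow> real" where
  "seg_angle d s s' =
     (let (p, q) = endpoints d s; (p', q') = endpoints d s'
      in line_angle d (\<lambda>i. q i - p i) (\<lambda>i. q' i - p' i))"

end

theory Submission
  imports Defs
begin


definition nrm :: "nat \<Rightarrow> (nat \<Rightarrow> real) \<Rightarrow> real" where
  "nrm d x = L2_set x {..<d}"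

lemma nrm_nonneg: "0 \<le> nrm d x" unfolding nrm_def by simp

lemma edist_nrm: "edist d x y = nrm d (\<lambda>i. x i - y i)"
  unfolding edist_def nrm_def L2_set_def by simp

lemma enorm_nrm: "enorm d u = nrm d u"
  unfolding enorm_def nrm_def L2_set_def edot_def by (simp add: power2_eq_square)

lemma nrm_sq: "(nrm d a)^2 = (\<Sum>i<d. (a i)^2)"
  unfolding nrm_def L2_set_def by (simp add: sum_nonneg)

lemma nrm_scale: "nrm d (\<lambda>i. c * f i) = \<bar>c\<bar> * nrm d f"
  unfolding nrm_def L2_set_def
  by (simp add: power_mult_distrib real_sqrt_mult flip: sum_distrib_left)

lemma nrm_tri: "nrm d (\<lambda>i. f i + g i) \<le> nrm d f + nrm d g"
  unfolding nrm_def by (rule L2_set_triangle_ineq)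

lemma nrm_diff_sq: "(nrm d (\<lambda>i. a i - b i))^2 = (nrm d a)^2 + (nrm d b)^2 - 2 * edot d a b"
  unfolding nrm_sq edot_def
  by (simp add: power2_diff sum.distrib sum_subtractf sum_distrib_left algebra_simps)

lemma cs: "\<bar>edot d a b\<bar> \<le> nrm d a * nrm d b"
proof -
  have "\<bar>edot d a b\<bar> \<le> (\<Sum>i<d. \<bar>a i\<bar> * \<bar>b i\<bar>)"
    unfolding edot_def abs_mult[symmetric] by (rule sum_abs)
  also have "\<dots> \<le> nrm d a * nrm d b" unfolding nrm_def by (rule L2_set_mult_ineq)
  finally show ?thesis .
qed

lemma edot_scale: "edot d (\<lambda>i. f i / c) (\<lambda>i. g i / e) = edot d f g / (c * e)"
  unfolding edot_def by (simp add: sum_divide_distrib)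

lemma edot_neg1: "edot d (\<lambda>i. - f i) g = - edot d f g"
  unfolding edot_def by (simp add: sum_negf)
lemma edot_neg2: "edot d f (\<lambda>i. - g i) = - edot d f g"
  unfolding edot_def by (simp add: sum_negf)

lemma nrm_sym: "nrm d (\<lambda>i. f i - g i) = nrm d (\<lambda>i. g i - f i)"
proof -
  have e: "(\<lambda>i. g i - f i) = (\<lambda>i. (-1) * (f i - g i))" by auto
  show ?thesis unfolding e nrm_scale by simp
qed

lemma seg_dist:
  assumes "x \<in> seg P Q" "y \<in> seg P Q"
  shows "edist d x y \<le> nrm d (\<lambda>i. Q i - P i)"
proof -
  obtain a where a: "x = (\<lambda>i. (1 - a) * P i + a * Q i)" "0 \<le> a" "a \<le> 1" using assms(1) unfolding seg_def by auto
  obtain b where b: "y = (\<lambda>i. (1 - b) * P i + b * Q i)" "0 \<le> b" "b \<le> 1" using assms(2) unfolding seg_def by auto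
  have "edist d x y = nrm d (\<lambda>i. (a - b) * (Q i - P i))"
    unfolding edist_nrm a b by (rule arg_cong[where f="nrm d"]) (auto simp: algebra_simps)
  also have "\<dots> = \<bar>a - b\<bar> * nrm d (\<lambda>i. Q i - P i)" by (rule nrm_scale)
  also have "\<dots> \<le> 1 * nrm d (\<lambda>i. Q i - P i)"
    by (rule mult_right_mono) (use a b in \<open>auto simp: nrm_nonneg\<close>)
  finally show ?thesis by simp
qed

lemma seg_swap: "seg p q = seg q p"
proof -
  have "seg p q \<subseteq> seg q p" for p q :: "nat \<Rightarrow> real"
  proof
    fix x assume "x \<in> seg p q"
    then obtain t where t: "x = (\<lambda>i. (1 - t) * p i + t * q i)" "0 \<le> t" "t \<le> 1" unfolding seg_def by auto
    have "\<exists>s. x = (\<lambda>i. (1 - s) * q i + s * p i) \<and> 0 \<le> s \<and> s \<le> 1"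
      using t by (intro exI[of _ "1-t"]) (auto simp: algebra_simps)
    thus "x \<in> seg q p" unfolding seg_def by simp
  qed
  thus ?thesis by blast
qed

lemma seg_ends: "P \<in> seg P Q" "Q \<in> seg P Q"
  unfolding seg_def mem_Collect_eq
  by (rule exI[of _ "0::real"], simp, rule exI[of _ "1::real"], simp)

lemma diam_ge: "nrm d (\<lambda>i. Q i - P i) \<le> diam_d d (seg P Q)"
proof -
  have "nrm d (\<lambda>i. Q i - P i) = edist d Q P" by (simp add: edist_nrm)
  also have "\<dots> \<le> diam_d d (seg P Q)" unfolding diam_d_def
    apply (rule cSup_upper)
    using seg_ends apply blast
    unfolding bdd_above_def
    by (rule exI[of _ "nrm d (\<lambda>i. Q i - P i)"]) (auto intro: seg_dist)
  finally show ?thesis .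
qed

lemma setdist_le: "z \<in> X \<Longrightarrow> setdist_d d y X \<le> edist d y z"
  unfolding setdist_d_def
  apply (rule cInf_lower) apply blast
  unfolding bdd_below_def by (rule exI[of _ 0]) (auto simp: edist_nrm nrm_nonneg)

lemma shadow:
  fixes P Q P' Q' :: "nat \<Rightarrow> real"
  assumes l: "l = nrm d (\<lambda>i. Q i - P i)" "l > 0" "l' = nrm d (\<lambda>i. Q' i - P' i)" "l' > 0" "l' \<le> l"
  and o: "ctr = (\<lambda>i. (1-t)*P i + t*Q i)" "ctr = (\<lambda>i. (1-t')*P' i + t'*Q' i)"
  and t: "0\<le>t" "t\<le>1" "0\<le>t'" "t'\<le>1" "\<bar>t - t'\<bar> \<le> \<sigma>/2" "0 < \<sigma>"
  and u: "nrm d (\<lambda>i. (Q i - P i)/l - (Q' i - P' i)/l') \<le> \<sigma>/2"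
  shows "shadows d \<sigma> (seg P Q) (seg P' Q')"
  unfolding shadows_def
proof
  fix y assume "y \<in> seg P' Q'"
  then obtain \<tau> where y: "y = (\<lambda>i. (1 - \<tau>) * P' i + \<tau> * Q' i)" "0 \<le> \<tau>" "\<tau> \<le> 1"
    unfolding seg_def by auto
  define r where "r = (\<tau> - t') * l'"
  define rs where "rs = max (-t*l) (min ((1-t)*l) r)"
  define ts where "ts = t + rs / l"
  have ab: "-t*l \<le> (1-t)*l" using l(2) by (simp add: algebra_simps)
  have rs1: "-t*l \<le> rs" "rs \<le> (1-t)*l" unfolding rs_def using ab by auto
  have ts: "0 \<le> ts" "ts \<le> 1" using rs1 l(2) unfolding ts_def by (auto simp: field_simps)
  define z where "z = (\<lambda>i. (1 - ts) * P i + ts * Q i)"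
  have zin: "z \<in> seg P Q" unfolding seg_def z_def using ts by blast
  define uu where "uu = (\<lambda>i. (Q i - P i)/l)"
  define uu' where "uu' = (\<lambda>i. (Q' i - P' i)/l')"
  have yz: "y i - z i = (r - rs) * uu' i + rs * (uu' i - uu i)" for i
  proof -
    have o1: "ctr i = (1-t)*P i + t*Q i" "ctr i = (1-t')*P' i + t'*Q' i" using o by (metis, metis)
    have "y i = ctr i + r * uu' i" unfolding y o1(2) r_def uu'_def using l(4) by (simp add: field_simps)
    moreover have "z i = ctr i + rs * uu i" unfolding z_def o1(1) ts_def uu_def using l(2) by (simp add: field_simps)
    ultimately show ?thesis by (simp add: algebra_simps)
  qed
  have nu': "nrm d uu' = 1"
  proof -
    have e: "uu' = (\<lambda>i. (1/l') * (Q' i - P' i))" unfolding uu'_def by auto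
    have "nrm d uu' = \<bar>1/l'\<bar> * nrm d (\<lambda>i. Q' i - P' i)" unfolding e by (rule nrm_scale)
    also have "\<dots> = 1" using l(4) unfolding l(3)[symmetric] by simp
    finally show ?thesis .
  qed
  have nd: "nrm d (\<lambda>i. uu' i - uu i) \<le> \<sigma>/2"
    using u nrm_sym[of d uu uu'] unfolding uu_def uu'_def by simp
  have rr: "-t'*l' \<le> r" "r \<le> (1-t')*l'" unfolding r_def using y(2,3) l(4) by (auto simp: algebra_simps)
  have m1: "(1-t)*l' \<le> (1-t)*l" using l(5) t(2) by (simp add: mult_left_mono)
  have m2: "t*l' \<le> t*l" using l(5) t(1) by (simp add: mult_left_mono)
  have m3: "\<bar>t - t'\<bar> * l' \<le> \<sigma>/2 * l'" using t(5) l(4) by (simp add: mult_right_mono)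
  have m4: "t' * l' \<le> l'" "(1-t')*l' \<le> l'" using t l(4) by (auto simp: mult_left_le_one_le)
  have m5: "t \<le> t' \<Longrightarrow> t*l' \<le> t'*l'" "t' \<le> t \<Longrightarrow> t'*l' \<le> t*l'" using l(4) by (auto simp: mult_right_mono)
  have A: "\<bar>r - rs\<bar> \<le> \<sigma>/2 * l'"
  proof -
    have "\<bar>r - rs\<bar> \<le> \<bar>t - t'\<bar> * l'"
      unfolding rs_def using rr m1 m2 m5 ab by (auto simp: abs_if algebra_simps max_def min_def split: if_splits)
    thus ?thesis using m3 by linarith
  qed
  have nn: "0 \<le> t*l" "0 \<le> (1-t)*l" using t(1,2) l(2) by auto
  have B: "\<bar>rs\<bar> \<le> l'"
    unfolding rs_def using rr m4 ab rs1 nn by (auto simp: abs_if max_def min_def split: if_splits)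
  have "edist d y z = nrm d (\<lambda>i. (r - rs) * uu' i + rs * (uu' i - uu i))"
    unfolding edist_nrm by (simp add: yz)
  also have "\<dots> \<le> nrm d (\<lambda>i. (r - rs) * uu' i) + nrm d (\<lambda>i. rs * (uu' i - uu i))"
    by (rule nrm_tri)
  also have "\<dots> = \<bar>r - rs\<bar> + \<bar>rs\<bar> * nrm d (\<lambda>i. uu' i - uu i)"
    by (simp add: nrm_scale nu')
  also have "\<dots> \<le> \<sigma>/2 * l' + l' * (\<sigma>/2)"
    apply (rule add_mono[OF A])
    apply (rule mult_mono[OF B nd]) using l(4) by (auto simp: nrm_nonneg)
  also have "\<dots> = \<sigma> * l'" by simp
  also have "\<dots> \<le> \<sigma> * diam_d d (seg P' Q')"
    using diam_ge[of d Q' P'] l(3) t(6) by (simp add: mult_left_mono)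
  finally show "setdist_d d y (seg P Q) \<le> \<sigma> * diam_d d (seg P' Q')"
    using setdist_le[OF zin, of d y] by linarith
qed

lemma edot_self: "edot d a a = (nrm d a)^2"
  unfolding nrm_sq edot_def by (simp add: power2_eq_square)

lemma dir_close:
  assumes n: "nrm d a = 1" "nrm d b = 1" "nrm d e = 1"
    and c: "c \<le> edot d a e" "c \<le> edot d b e" "c \<le> \<bar>edot d a b\<bar>" "3/4 < c" "2*(1-c) \<le> \<sigma>^2/4" "0 < \<sigma>"
  shows "nrm d (\<lambda>i. a i - b i) \<le> \<sigma>/2"
proof -
  define x where "x = nrm d (\<lambda>i. a i - e i)"
  define y where "y = nrm d (\<lambda>i. e i - b i)"
  have x2: "x^2 \<le> 2 - 2*c" unfolding x_def nrm_diff_sq using n c by simp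
  have y2: "y^2 \<le> 2 - 2*c" unfolding y_def nrm_sym[of d e b] nrm_diff_sq using n c by simp
  have "nrm d (\<lambda>i. a i - b i) = nrm d (\<lambda>i. (a i - e i) + (e i - b i))" by simp
  also have "\<dots> \<le> x + y" unfolding x_def y_def by (rule nrm_tri)
  finally have ab: "nrm d (\<lambda>i. a i - b i) \<le> x + y" .
  have "(nrm d (\<lambda>i. a i - b i))^2 \<le> (x+y)^2"
    by (rule power_mono[OF ab]) (simp add: nrm_nonneg)
  also have "\<dots> \<le> 2*x^2 + 2*y^2" using sum_squares_ge_zero[of "x-y" 0]
    by (simp add: power2_eq_square algebra_simps)
  also have "\<dots> \<le> 8 - 8*c" using x2 y2 by simp
  finally have "2 - 2 * edot d a b \<le> 8 - 8*c" unfolding nrm_diff_sq using n by simp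
  hence pos: "edot d a b > 0" using c(4) by simp
  hence "c \<le> edot d a b" using c(3) by simp
  hence "(nrm d (\<lambda>i. a i - b i))^2 \<le> (\<sigma>/2)^2" unfolding nrm_diff_sq using n c(5)
    by (simp add: power_divide)
  thus ?thesis by (rule power2_le_imp_le) (use c in simp)
qed

lemma pos_len:
  assumes "p \<in> Rd d" "q \<in> Rd d" "p \<noteq> q"
  shows "0 < nrm d (\<lambda>i. q i - p i)"
proof -
  have "nrm d (\<lambda>i. q i - p i) \<noteq> 0"
  proof
    assume "nrm d (\<lambda>i. q i - p i) = 0"
    hence "\<forall>i\<in>{..<d}. q i - p i = 0" unfolding nrm_def by (simp add: L2_set_eq_0_iff)
    hence "p i = q i" for i
    proof (cases "i < d")
      case True thus ?thesis using \<open>\<forall>i\<in>{..<d}. q i - p i = 0\<close> by simp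
    next
      case False thus ?thesis using assms(1,2) unfolding Rd_def by simp
    qed
    hence "p = q" by (rule ext)
    thus False using assms(3) by simp
  qed
  thus ?thesis using nrm_nonneg[of d "\<lambda>i. q i - p i"] by linarith
qed

lemma angle_bound:
  assumes "arccos X \<le> \<theta>" "0 \<le> X" "X \<le> 1" "\<theta> \<le> pi"
  shows "cos \<theta> \<le> X"
proof -
  have "cos \<theta> \<le> cos (arccos X)"
    by (rule cos_monotone_0_pi_le) (use assms arccos_lbound in auto)
  thus ?thesis using assms by (simp add: cos_arccos)
qed

lemma main_bound:
  assumes d: "d \<ge> 1" and sg: "0 < \<sigma>" "\<sigma> \<le> 1" and th: "0 < \<theta>" "\<theta> < pi / 2"
    and fin: "finite L" and segs: "\<forall>s\<in>L. is_segment d s"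
    and exp: "exposed d \<sigma> L" and inter: "\<Inter>L \<noteq> {}"
    and ang: "\<forall>s\<in>L. \<forall>s'\<in>L. seg_angle d s s' \<le> \<theta>"
    and sn: "sin \<theta> \<le> \<sigma> / 4"
  shows "real (card L) \<le> 3 / \<sigma>^2"
proof (cases "L = {}")
  case True thus ?thesis by simp
next
  case False
  then obtain s0 where s0: "s0 \<in> L" by blast
  obtain x0 where x0: "x0 \<in> \<Inter>L" using inter by blast
  define c where "c = cos \<theta>"
  have c0: "0 < c" unfolding c_def using th by (simp add: cos_gt_zero_pi)
  have s0': "0 \<le> sin \<theta>" using th by (simp add: sin_ge_zero)
  have sc: "(sin \<theta>)^2 + c^2 = 1" unfolding c_def by simp
  have ssq: "(sin \<theta>)^2 \<le> (\<sigma>/4)^2" using sn s0' by (simp add: power_mono)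
  have c34: "3/4 < c"
  proof -
    have "\<sigma>^2 \<le> 1" using sg by (simp add: power_le_one)
    hence "(sin \<theta>)^2 \<le> 1/16" using ssq by (simp add: power_divide)
    hence "9/16 < c^2" using sc by linarith
    hence "(3/4)^2 < c^2" by (simp add: power_divide)
    thus ?thesis by (rule power_less_imp_less_base) (use c0 in auto)
  qed
  have csig: "2*(1-c) \<le> \<sigma>^2/4"
  proof -
    have c1: "0 \<le> 2*(1-c)" unfolding c_def by simp
    have "2*(1-c) * 1 \<le> 2*(1-c)*(1+c)" by (rule mult_left_mono) (use c0 c1 in auto)
    also have "\<dots> = 2*(sin \<theta>)^2" using sc by (simp add: algebra_simps power2_eq_square)
    also have "\<dots> \<le> 2*(\<sigma>/4)^2" using ssq by simp
    also have "\<dots> \<le> \<sigma>^2/4" by (simp add: power_divide)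
    finally show ?thesis by simp
  qed
  define pp where "pp s = fst (endpoints d s)" for s
  define qq where "qq s = snd (endpoints d s)" for s
  have epr: "pp s \<in> Rd d \<and> qq s \<in> Rd d \<and> pp s \<noteq> qq s \<and> s = seg (pp s) (qq s)" if "s \<in> L" for s
  proof -
    have "\<exists>pq. fst pq \<in> Rd d \<and> snd pq \<in> Rd d \<and> fst pq \<noteq> snd pq \<and> s = seg (fst pq) (snd pq)"
      unfolding split_paired_Ex fst_conv snd_conv using bspec[OF segs that] unfolding is_segment_def .
    from someI_ex[OF this] show ?thesis unfolding pp_def qq_def endpoints_def .
  qed
  define len where "len s = nrm d (\<lambda>i. qq s i - pp s i)" for s
  have lenpos: "0 < len s" if "s \<in> L" for s unfolding len_def using epr[OF that] pos_len by blast
  define w where "w s = (\<lambda>i. (qq s i - pp s i) / len s)" for s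
  have nw: "nrm d (w s) = 1" if "s \<in> L" for s
  proof -
    have e: "w s = (\<lambda>i. (1/len s) * (qq s i - pp s i))" unfolding w_def by auto
    have "nrm d (w s) = \<bar>1/len s\<bar> * len s" unfolding e nrm_scale len_def ..
    thus ?thesis using lenpos[OF that] by simp
  qed
  have angw: "c \<le> \<bar>edot d (w s) (w s')\<bar>" if "s \<in> L" "s' \<in> L" for s s'
  proof -
    have "seg_angle d s s' = line_angle d (\<lambda>i. qq s i - pp s i) (\<lambda>i. qq s' i - pp s' i)"
      unfolding seg_angle_def pp_def qq_def by (simp add: case_prod_beta Let_def)
    also have "\<dots> = arccos \<bar>edot d (w s) (w s')\<bar>"
      unfolding line_angle_def enorm_nrm w_def edot_scale len_def
      using lenpos[OF that(1)] lenpos[OF that(2)] unfolding len_def by (simp add: abs_divide abs_mult)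
    finally have eq: "seg_angle d s s' = arccos \<bar>edot d (w s) (w s')\<bar>" .
    have "seg_angle d s s' \<le> \<theta>" using ang that by blast
    hence "arccos \<bar>edot d (w s) (w s')\<bar> \<le> \<theta>" unfolding eq .
    moreover have "\<bar>edot d (w s) (w s')\<bar> \<le> 1" using cs[of d "w s" "w s'"] nw that by simp
    ultimately show ?thesis unfolding c_def using th by (intro angle_bound) auto
  qed
  define \<epsilon> where "\<epsilon> s = (0 \<le> edot d (w s) (w s0))" for s
  define P where "P s = (if \<epsilon> s then pp s else qq s)" for s
  define Q where "Q s = (if \<epsilon> s then qq s else pp s)" for s
  define u where "u s = (\<lambda>i. (Q s i - P s i) / len s)" for s
  have lenPQ: "len s = nrm d (\<lambda>i. Q s i - P s i)" for s
    unfolding len_def P_def Q_def using nrm_sym by auto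
  have segPQ: "seg (P s) (Q s) = s" if "s \<in> L" for s
    unfolding P_def Q_def using epr[OF that] seg_swap by auto
  have uw: "u s = (if \<epsilon> s then w s else (\<lambda>i. - w s i))" for s
    unfolding u_def w_def P_def Q_def by (auto simp: fun_eq_iff minus_divide_left)
  have nu: "nrm d (u s) = 1" if "s \<in> L" for s
  proof (cases "\<epsilon> s")
    case True thus ?thesis using nw[OF that] uw by simp
  next
    case False
    have "nrm d (u s) = nrm d (\<lambda>i. (-1) * w s i)" using False uw by simp
    also have "\<dots> = \<bar>-1\<bar> * nrm d (w s)" by (rule nrm_scale)
    finally show ?thesis using nw[OF that] by simp
  qed
  have eps0: "\<epsilon> s0" unfolding \<epsilon>_def edot_self by simp
  hence us0: "u s0 = w s0" using uw by simp
  have angu: "c \<le> \<bar>edot d (u s) (u s')\<bar>" if "s \<in> L" "s' \<in> L" for s s'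
    using angw[OF that] uw[of s] uw[of s'] by (auto simp: edot_neg1 edot_neg2)
  have angu0: "c \<le> edot d (u s) (u s0)" if "s \<in> L" for s
    using angw[OF that s0] unfolding us0 uw[of s] \<epsilon>_def by (auto simp: edot_neg1)
  have uclose: "nrm d (\<lambda>i. u s i - u s' i) \<le> \<sigma>/2" if "s \<in> L" "s' \<in> L" for s s'
    by (rule dir_close[OF nu[OF that(1)] nu[OF that(2)] nu[OF s0] angu0[OF that(1)] angu0[OF that(2)]
          angu[OF that] c34 csig sg(1)])
  have exT: "\<exists>t. x0 = (\<lambda>i. (1-t)*P s i + t*Q s i) \<and> 0 \<le> t \<and> t \<le> 1" if "s \<in> L" for s
  proof -
    have "x0 \<in> s" using x0 that by blast
    hence "x0 \<in> seg (P s) (Q s)" using segPQ[OF that] by simp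
    thus ?thesis unfolding seg_def mem_Collect_eq .
  qed
  define T where "T s = (SOME t. x0 = (\<lambda>i. (1-t)*P s i + t*Q s i) \<and> 0 \<le> t \<and> t \<le> 1)" for s
  have T: "x0 = (\<lambda>i. (1-T s)*P s i + T s*Q s i) \<and> 0 \<le> T s \<and> T s \<le> 1" if "s \<in> L" for s
    unfolding T_def by (rule someI_ex[OF exT[OF that]])
  define key where "key s = nat \<lfloor>T s * (2/\<sigma>)\<rfloor>" for s
  define K where "K = nat \<lfloor>2/\<sigma>\<rfloor>"
  have close_key: "\<bar>T s - T s'\<bar> \<le> \<sigma>/2" if "s \<in> L" "s' \<in> L" "key s = key s'" for s s'
  proof -
    have a: "0 \<le> T s * (2/\<sigma>)" "0 \<le> T s' * (2/\<sigma>)" using T that sg by auto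
    hence f: "0 \<le> \<lfloor>T s * (2/\<sigma>)\<rfloor>" "0 \<le> \<lfloor>T s' * (2/\<sigma>)\<rfloor>" by auto
    have "\<lfloor>T s * (2/\<sigma>)\<rfloor> = \<lfloor>T s' * (2/\<sigma>)\<rfloor>"
      using eq_nat_nat_iff[OF f] that(3) unfolding key_def by blast
    hence "\<bar>T s * (2/\<sigma>) - T s' * (2/\<sigma>)\<bar> < 1" by linarith
    hence X: "\<bar>T s * (2/\<sigma>) - T s' * (2/\<sigma>)\<bar> * (\<sigma>/2) \<le> 1 * (\<sigma>/2)"
      using sg by (intro mult_right_mono) auto
    have "(T s * (2/\<sigma>) - T s' * (2/\<sigma>)) * (\<sigma>/2) = T s - T s'" using sg by (simp add: field_simps)
    hence "\<bar>T s * (2/\<sigma>) - T s' * (2/\<sigma>)\<bar> * (\<sigma>/2) = \<bar>T s - T s'\<bar>" using sg by (metis abs_mult abs_of_pos half_gt_zero)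
    thus ?thesis using X by simp
  qed
  have nokey: "False" if "s \<in> L" "s' \<in> L" "s \<noteq> s'" "key s = key s'" "len s' \<le> len s" for s s'
  proof -
    have "shadows d \<sigma> (seg (P s) (Q s)) (seg (P s') (Q s'))"
      apply (rule shadow[OF lenPQ lenpos[OF that(1)] lenPQ lenpos[OF that(2)] that(5)])
      using T[OF that(1)] T[OF that(2)] close_key[OF that(1,2,4)] sg uclose[OF that(1,2)]
      unfolding u_def by auto
    thus False using exp that segPQ unfolding exposed_def by auto
  qed
  have inj: "inj_on key L"
  proof (rule inj_onI, rule ccontr)
    fix s s' assume a: "s \<in> L" "s' \<in> L" "key s = key s'" "s \<noteq> s'"
    show False
    proof (cases "len s' \<le> len s")
      case True thus False using nokey[OF a(1,2,4,3)] by simp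
    next
      case False thus False using nokey[OF a(2,1) a(4)[symmetric] a(3)[symmetric]] by simp
    qed
  qed
  have sub: "key ` L \<subseteq> {..K}"
  proof
    fix k assume "k \<in> key ` L"
    then obtain s where "s \<in> L" "k = key s" by blast
    hence "T s * (2/\<sigma>) \<le> 2/\<sigma>" using T[of s] sg by (intro mult_left_le_one_le) auto
    thus "k \<in> {..K}" unfolding \<open>k = key s\<close> key_def K_def by (simp add: floor_mono nat_mono)
  qed
  have "card L \<le> card {..K}" by (rule card_inj_on_le[OF inj sub]) simp
  hence "real (card L) \<le> real K + 1" by simp
  also have "\<dots> \<le> 2/\<sigma> + 1" unfolding K_def using sg by simp
  also have "\<dots> \<le> 3/\<sigma>^2"
  proof -
    have "\<sigma>^2 \<le> \<sigma>" using sg by (simp add: power2_eq_square mult_left_le_one_le)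
    hence i: "1/\<sigma> \<le> 1/\<sigma>^2" using sg by (simp add: frac_le)
    have ii: "1 \<le> 1/\<sigma>^2" using sg by (simp add: power_le_one)
    show ?thesis using i ii by simp
  qed
  finally show ?thesis .
qed


theorem mainTheorem5:
  shows "\<exists>C::real. \<forall>(d::nat) (\<sigma>::real) (\<theta>::real) (L::(nat \<Rightarrow> real) set set).
    d \<ge> 1 \<longrightarrow> 0 < \<sigma> \<longrightarrow> \<sigma> \<le> 1 \<longrightarrow> 0 < \<theta> \<longrightarrow> \<theta> < pi / 2 \<longrightarrow>
    finite L \<longrightarrow> (\<forall>s\<in>L. is_segment d s) \<longrightarrow>
    exposed d \<sigma> L \<longrightarrow>
    \<Inter>L \<noteq> {} \<longrightarrow>
    (\<forall>s\<in>L. \<forall>s'\<in>L. seg_angle d s s' \<le> \<theta>) \<longrightarrow>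
    sin \<theta> \<le> \<sigma> / 4 \<longrightarrow>
    real (card L) \<le> C / \<sigma>^2"
  apply (rule exI[of _ 3])
  using main_bound by blast

end
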